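(* Let $\mathbb{X},\mathbb{Y}$ be two-dimensional smooth real Banach spaces, with $\mathbb{Y}$ in addition strictly convex. Let $T\in\mathbb{L}(\mathbb{X},\mathbb{Y})$ have rank two, $\|T\|=1$ and $M_T=\{\pm x\}$. Let $y\in x^\perp\cap S_{\mathbb{X}}$; then $0<\|Ty\|<1$, and set $w=Ty/\|Ty\|$. Then $T$ is not an extreme contraction if and only if $(x,Tx)$ is a $\mu$-CPP with respect to the pair $(y,w)$ for some $\mu>\|Ty\|$.
   Context: $M_T=\{x\in S_{\mathbb{X}}:\|Tx\|=\|T\|\}$. A norm one $T$ is an extreme contraction if it is an extreme point of the closed unit ball of $\mathbb{L}(\mathbb{X},\mathbb{Y})$. $B(x,r)=\{u:\|u-x\|<r\}$. $x\perp_B y$ means $\|x+\lambda y\|\ge\|x\|$ for all real $\lambda$; $x^\perp=\{y:x\perp_By\}$. For $x\in S_{\mathbb{X}}$, $y'\in S_{\mathbb{Y}}$, $z_0\in x^\perp\cap S_{\mathbb{X}}$, $w_0\in y'^\perp\cap S_{\mathbb{Y}}$ and $\mu>0$, $(x,y')$ is a $\mu$-CPP with respect to $(z_0,w_0)$ if there exists $r>0$ such that for all $a,b\in\mathbb{R}$, $ax+bz_0\in B(x,r)\cap S_{\mathbb{X}}$ implies $\|ay'+b\mu w_0\|\le1$. *)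

theory Defs
  imports "HOL-Analysis.Analysis"
begin

definition smooth_space :: "'a::real_normed_vector itself \<Rightarrow> bool" where
  "smooth_space _ \<longleftrightarrow> (\<forall>x::'a. norm x = 1 \<longrightarrow>
     (\<exists>!f::'a \<Rightarrow> real. bounded_linear f \<and> onorm f = 1 \<and> f x = 1))"

definition strictly_convex_space :: "'a::real_normed_vector itself \<Rightarrow> bool" where
  "strictly_convex_space _ \<longleftrightarrow> (\<forall>x y::'a. norm x = 1 \<and> norm y = 1 \<and> x \<noteq> y
     \<longrightarrow> norm ((1/2) *\<^sub>R (x + y)) < 1)"

definition bj_orth :: "'a::real_normed_vector \<Rightarrow> 'a \<Rightarrow> bool" where
  "bj_orth x y \<longleftrightarrow> (\<forall>l::real. norm (x + l *\<^sub>R y) \<ge> norm x)"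

definition norm_attain :: "('a::real_normed_vector \<Rightarrow> 'b::real_normed_vector) \<Rightarrow> 'a set" where
  "norm_attain T = {x. norm x = 1 \<and> norm (T x) = onorm T}"

definition extreme_contraction :: "('a::real_normed_vector \<Rightarrow> 'b::real_normed_vector) \<Rightarrow> bool" where
  "extreme_contraction T \<longleftrightarrow> bounded_linear T \<and> onorm T = 1 \<and>
     (\<forall>T1 T2 (t::real). bounded_linear T1 \<and> bounded_linear T2 \<and> onorm T1 \<le> 1 \<and> onorm T2 \<le> 1
        \<and> 0 < t \<and> t < 1 \<and> T = (\<lambda>z. t *\<^sub>R T1 z + (1 - t) *\<^sub>R T2 z) \<longrightarrow> T1 = T2)"

definition mu_CPP :: "real \<Rightarrow> 'a::real_normed_vector \<Rightarrow> 'b::real_normed_vector \<Rightarrow> 'a \<Rightarrow> 'b \<Rightarrow> bool" where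
  "mu_CPP \<mu> x y' z0 w0 \<longleftrightarrow>
     norm x = 1 \<and> norm y' = 1 \<and> bj_orth x z0 \<and> norm z0 = 1 \<and> bj_orth y' w0 \<and> norm w0 = 1 \<and> \<mu> > 0 \<and>
     (\<exists>r>0. \<forall>a b::real. a *\<^sub>R x + b *\<^sub>R z0 \<in> ball x r \<and> norm (a *\<^sub>R x + b *\<^sub>R z0) = 1
        \<longrightarrow> norm (a *\<^sub>R y' + (b * \<mu>) *\<^sub>R w0) \<le> 1)"

end

theory Submission
  imports Defs
begin


lemma orth_coef:
  fixes u v :: "'a::real_normed_vector"
  assumes "bj_orth u v" "norm u = 1"
  shows "\<bar>a\<bar> \<le> norm (a *\<^sub>R u + b *\<^sub>R v)"
proof (cases "a = 0")
  case True then show ?thesis by simp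
next
  case False
  have "a *\<^sub>R u + b *\<^sub>R v = a *\<^sub>R (u + (b/a) *\<^sub>R v)" using False
    by (simp add: scaleR_add_right)
  then have "norm (a *\<^sub>R u + b *\<^sub>R v) = \<bar>a\<bar> * norm (u + (b/a) *\<^sub>R v)" by simp
  moreover have "norm (u + (b/a) *\<^sub>R v) \<ge> 1" using assms unfolding bj_orth_def by metis
  ultimately show ?thesis by (metis abs_ge_zero mult_left_mono mult.right_neutral)
qed

lemma coords_unique:
  fixes u v :: "'a::real_normed_vector"
  assumes "bj_orth u v" "norm u = 1" "v \<noteq> 0"
    and "a *\<^sub>R u + b *\<^sub>R v = a' *\<^sub>R u + b' *\<^sub>R v"
  shows "a = a' \<and> b = b'"
proof -
  have e: "(a - a') *\<^sub>R u + (b - b') *\<^sub>R v = 0" using assms(4)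
    by (simp add: algebra_simps)
  have "\<bar>a - a'\<bar> \<le> 0" using orth_coef[OF assms(1,2), of "a-a'" "b-b'"] e by simp
  then have "a = a'" by simp
  with e have "(b - b') *\<^sub>R v = 0" by simp
  with assms(3) have "b = b'" by simp
  with \<open>a = a'\<close> show ?thesis by simp
qed

lemma strict_conv_mid:
  fixes p q :: "'b::real_normed_vector"
  assumes "strictly_convex_space TYPE('b)" "norm p \<le> 1" "norm q \<le> 1"
    "norm ((1/2) *\<^sub>R (p + q)) = 1"
  shows "p = q"
proof -
  have "norm ((1/2) *\<^sub>R (p + q)) = norm (p + q) / 2" by simp
  moreover have "norm (p + q) \<le> norm p + norm q" by (rule norm_triangle_ineq)
  ultimately have h: "2 \<le> norm p + norm q" using assms(4) by linarith
  have "norm p = 1" using h assms(2,3) by linarith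
  moreover have "norm q = 1" using h assms(2,3) by linarith
  ultimately have n1: "norm p = 1" "norm q = 1" by simp_all
  have sc: "\<forall>x y::'b. norm x = 1 \<and> norm y = 1 \<and> x \<noteq> y
     \<longrightarrow> norm ((1/2) *\<^sub>R (x + y)) < 1" using assms(1) unfolding strictly_convex_space_def .
  show ?thesis
  proof (rule ccontr)
    assume "p \<noteq> q"
    then have "norm ((1/2) *\<^sub>R (p + q)) < 1" using sc n1 by blast
    with assms(4) show False by simp
  qed
qed

lemma smooth_unique:
  fixes x :: "'a::real_normed_vector" and g1 g2 :: "'a \<Rightarrow> real"
  assumes "smooth_space TYPE('a)" "norm x = 1"
    "bounded_linear g1" "onorm g1 = 1" "g1 x = 1"
    "bounded_linear g2" "onorm g2 = 1" "g2 x = 1"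
  shows "g1 = g2"
proof -
  have "\<forall>x::'a. norm x = 1 \<longrightarrow> (\<exists>!f::'a \<Rightarrow> real. bounded_linear f \<and> onorm f = 1 \<and> f x = 1)"
    using assms(1) unfolding smooth_space_def .
  then have "\<exists>!f::'a \<Rightarrow> real. bounded_linear f \<and> onorm f = 1 \<and> f x = 1"
    using assms(2) by simp
  note E = the1_equality[OF this]
  have "(THE f. bounded_linear f \<and> onorm f = 1 \<and> f x = 1) = g1" by (rule E) (use assms(3,4,5) in simp)
  moreover have "(THE f. bounded_linear f \<and> onorm f = 1 \<and> f x = 1) = g2" by (rule E) (use assms(6,7,8) in simp)
  ultimately show ?thesis by simp
qed

lemma onorm_one:
  fixes g :: "'a::real_normed_vector \<Rightarrow> real"
  assumes "bounded_linear g" "\<And>z. norm (g z) \<le> norm z" "norm x = 1" "g x = 1"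
  shows "onorm g = 1"
proof -
  have "onorm g \<le> 1" by (rule onorm_bound) (use assms(2) in auto)
  moreover have "norm (g x) \<le> onorm g * norm x" by (rule onorm[OF assms(1)])
  ultimately show ?thesis using assms by simp
qed

lemma full_subspace:
  fixes V :: "'a::real_vector set"
  assumes "subspace V" "dim V = 2" "dim (UNIV :: 'a set) = 2"
  shows "V = UNIV"
proof (rule ccontr)
  assume "V \<noteq> UNIV"
  then obtain z where z: "z \<notin> V" by auto
  obtain B where B: "B \<subseteq> V" "independent B" "V \<subseteq> span B" "card B = dim V"
    using real_vector.basis_exists by blast
  obtain C :: "'a set" where C: "independent C" "UNIV \<subseteq> span C" "card C = dim (UNIV::'a set)"
    using real_vector.basis_exists by blast
  have "span B \<subseteq> V" using B(1) assms(1) by (simp add: real_vector.span_minimal)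
  then have zB: "z \<notin> span B" using z by auto
  have fB: "finite B" using B(4) assms(2) by (metis card.infinite zero_neq_numeral)
  have fC: "finite C" using C(3) assms(3) by (metis card.infinite zero_neq_numeral)
  have ind: "independent (insert z B)" using zB B(2) by (rule real_vector.independent_insertI)
  have "z \<notin> B" using zB real_vector.span_base by blast
  then have "card (insert z B) = 3" using fB B(4) assms(2) by simp
  moreover have "card (insert z B) \<le> card C"
    using real_vector.independent_span_bound[OF fC ind] C(2) by auto
  ultimately show False using C(3) assms(3) by simp
qed



locale thmctx =
  fixes T :: "'a::banach \<Rightarrow> 'b::banach" and x y :: 'a
  assumes dX: "dim (UNIV :: 'a set) = 2" and dY: "dim (UNIV :: 'b set) = 2"
    and smX: "smooth_space TYPE('a)" and smY: "smooth_space TYPE('b)"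
    and scY: "strictly_convex_space TYPE('b)"
    and blT: "bounded_linear T" and dR: "dim (range T) = 2" and oT: "onorm T = 1"
    and MT: "norm_attain T = {x, -x}"
    and oxy: "bj_orth x y" and ny: "norm y = 1"
begin

interpretation Tl: bounded_linear T by (rule blT)

lemma nx: "norm x = 1" and nTx: "norm (T x) = 1"
proof -
  have "x \<in> norm_attain T" using MT by simp
  then show "norm x = 1" "norm (T x) = 1" using oT unfolding norm_attain_def by auto
qed

lemma Tbound: "norm (T z) \<le> norm z"
  using onorm[OF blT, of z] oT by simp

lemma y_ne: "y \<noteq> 0" using ny by auto

lemma x_notin: "x \<notin> span {y}"
proof
  assume "x \<in> span {y}"
  then obtain k where k: "x = k *\<^sub>R y" by (auto simp: real_vector.span_singleton)
  have "norm (x + (-k) *\<^sub>R y) \<ge> norm x" using oxy unfolding bj_orth_def by blast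
  then show False using k nx by simp
qed

lemma x_ne_y: "x \<noteq> y" "y \<noteq> -x"
proof -
  show "x \<noteq> y" using x_notin real_vector.span_base[of y "{y}"] by auto
  show "y \<noteq> -x"
  proof
    assume "y = -x"
    then have "x = (-1) *\<^sub>R y" by simp
    then have "x \<in> span {y}" by (metis real_vector.span_base real_vector.span_scale singletonI)
    then show False using x_notin by simp
  qed
qed

lemma spanXY: "span {x, y} = UNIV"
proof -
  have ind: "independent {x, y}"
    using x_notin y_ne
    by (simp add: real_vector.independent_insert x_ne_y(1))
  have "dim (span {x, y}) = 2"
    using real_vector.dim_span_eq_card_independent[OF ind] x_ne_y(1) by simp
  then show ?thesis
    using full_subspace[OF real_vector.subspace_span _ dX] by blast
qed

lemma decomp: "\<exists>a b. z = a *\<^sub>R x + b *\<^sub>R y"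
proof -
  have "z \<in> span (insert x {y})" using spanXY by simp
  then obtain k where "z - k *\<^sub>R x \<in> span {y}" by (auto simp: real_vector.span_breakdown_eq)
  then obtain b where "z - k *\<^sub>R x = b *\<^sub>R y" by (auto simp: real_vector.span_singleton)
  then have "z = k *\<^sub>R x + b *\<^sub>R y" by (simp add: algebra_simps)
  then show ?thesis by blast
qed

definition ca where "ca z = (SOME a. \<exists>b. z = a *\<^sub>R x + b *\<^sub>R y)"
definition cb where "cb z = (SOME b. z = ca z *\<^sub>R x + b *\<^sub>R y)"

lemma dec: "z = ca z *\<^sub>R x + cb z *\<^sub>R y"
proof -
  have "\<exists>b. z = ca z *\<^sub>R x + b *\<^sub>R y"
    unfolding ca_def by (rule someI_ex) (rule decomp)
  then show ?thesis unfolding cb_def by (rule someI_ex)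
qed

lemma coord_eq: assumes "z = a *\<^sub>R x + b *\<^sub>R y" shows "ca z = a" "cb z = b"
  using coords_unique[OF oxy nx y_ne, of "ca z" "cb z" a b] dec[of z] assms by auto

lemma ca_x: "ca x = 1" and cb_x: "cb x = 0" and ca_y: "ca y = 0" and cb_y: "cb y = 1"
  using coord_eq[of x 1 0] coord_eq[of y 0 1] by auto

lemma ca_add: "ca (u + v) = ca u + ca v" and cb_add: "cb (u + v) = cb u + cb v"
proof -
  have "u + v = (ca u + ca v) *\<^sub>R x + (cb u + cb v) *\<^sub>R y"
    using dec[of u] dec[of v] by (simp add: algebra_simps)
  then show "ca (u + v) = ca u + ca v" "cb (u + v) = cb u + cb v" using coord_eq by blast+
qed

lemma ca_scale: "ca (c *\<^sub>R u) = c * ca u" and cb_scale: "cb (c *\<^sub>R u) = c * cb u"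
proof -
  have "c *\<^sub>R u = (c * ca u) *\<^sub>R x + (c * cb u) *\<^sub>R y"
    using dec[of u] by (metis scaleR_add_right scaleR_scaleR)
  then show "ca (c *\<^sub>R u) = c * ca u" "cb (c *\<^sub>R u) = c * cb u" using coord_eq by blast+
qed

lemma ca_bound: "\<bar>ca z\<bar> \<le> norm z"
  using orth_coef[OF oxy nx, of "ca z" "cb z"] dec[of z] by simp

lemma cb_bound: "\<bar>cb z\<bar> \<le> 2 * norm z"
proof -
  have "cb z *\<^sub>R y = z - ca z *\<^sub>R x" using dec[of z] by (simp add: algebra_simps)
  then have "\<bar>cb z\<bar> = norm (z - ca z *\<^sub>R x)" using ny by (metis norm_scaleR mult.right_neutral)
  also have "\<dots> \<le> norm z + \<bar>ca z\<bar>" using norm_triangle_ineq4[of z "ca z *\<^sub>R x"] nx by simp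
  finally show ?thesis using ca_bound[of z] by simp
qed

lemma bl_ca: "bounded_linear ca"
  by (rule bounded_linear_intro[where K=1]) (auto simp: ca_add ca_scale ca_bound)

lemma bl_cb: "bounded_linear cb"
proof (rule bounded_linear_intro[where K=2])
  fix z show "norm (cb z) \<le> norm z * 2" using cb_bound[of z] by simp
qed (auto simp: cb_add cb_scale)

lemma onorm_ca: "onorm ca = 1"
  by (rule onorm_one[OF bl_ca _ nx ca_x]) (simp add: ca_bound)

lemma T_dec: "T z = ca z *\<^sub>R T x + cb z *\<^sub>R T y"
  by (subst dec[of z]) (simp add: Tl.add Tl.scaleR)

lemma rangeT: "range T = UNIV"
proof -
  have "subspace (range T)" unfolding real_vector.subspace_def
  proof (intro conjI ballI allI)
    show "0 \<in> range T" using Tl.zero by (metis rangeI)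
  next
    fix u v assume "u \<in> range T" "v \<in> range T"
    then obtain a b where "u = T a" "v = T b" by auto
    then show "u + v \<in> range T" by (metis Tl.add rangeI)
  next
    fix c u assume "u \<in> range T"
    then obtain a where "u = T a" by auto
    then show "c *\<^sub>R u \<in> range T" by (metis Tl.scaleR rangeI)
  qed
  then show ?thesis using full_subspace dR dY by blast
qed

lemma Ty_ne: "T y \<noteq> 0"
proof
  assume h: "T y = 0"
  have "range T \<subseteq> span {T x}"
  proof
    fix v assume "v \<in> range T"
    then obtain z where "v = T z" by auto
    then have "v = ca z *\<^sub>R T x" using T_dec[of z] h by simp
    then show "v \<in> span {T x}" by (simp add: real_vector.span_base real_vector.span_scale)
  qed
  then have "dim (range T) \<le> card {T x}" by (rule real_vector.dim_le_card) simp
  then show False using dR by simp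
qed

lemma nTy_pos: "0 < norm (T y)" using Ty_ne by simp

lemma nTy_lt: "norm (T y) < 1"
proof -
  have le: "norm (T y) \<le> 1" using Tbound[of y] ny by simp
  have "norm (T y) \<noteq> 1"
  proof
    assume "norm (T y) = 1"
    then have "y \<in> norm_attain T" using ny oT unfolding norm_attain_def by simp
    then show False using MT x_ne_y by auto
  qed
  with le show ?thesis by simp
qed


lemma f_exists: obtains f :: "'b \<Rightarrow> real" where "bounded_linear f" "onorm f = 1" "f (T x) = 1"
proof -
  have "\<forall>v::'b. norm v = 1 \<longrightarrow> (\<exists>!f::'b \<Rightarrow> real. bounded_linear f \<and> onorm f = 1 \<and> f v = 1)"
    using smY unfolding smooth_space_def .
  then have "\<exists>!f::'b \<Rightarrow> real. bounded_linear f \<and> onorm f = 1 \<and> f (T x) = 1" using nTx by simp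
  then have "\<exists>f::'b \<Rightarrow> real. bounded_linear f \<and> onorm f = 1 \<and> f (T x) = 1" by (rule ex1_implies_ex)
  then show ?thesis using that by blast
qed

lemma dir1:
  assumes ne: "\<not> extreme_contraction T"
  shows "\<exists>\<mu>. \<mu> > norm (T y) \<and> mu_CPP \<mu> x (T x) y ((1 / norm (T y)) *\<^sub>R T y)"
proof -
  define \<nu> where "\<nu> = norm (T y)"
  define w where "w = (1 / \<nu>) *\<^sub>R T y"
  have \<nu>pos: "\<nu> > 0" using nTy_pos \<nu>_def by simp
  have Tyw: "T y = \<nu> *\<^sub>R w" using \<nu>pos w_def by simp
  obtain T1 T2 t where bl1: "bounded_linear T1" and bl2: "bounded_linear T2"
    and o1: "onorm T1 \<le> 1" and o2: "onorm T2 \<le> 1" and t: "0 < t" "t < 1"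
    and Teq: "T = (\<lambda>z. t *\<^sub>R T1 z + (1 - t) *\<^sub>R T2 z)" and T12: "T1 \<noteq> T2"
    using ne blT oT unfolding extreme_contraction_def by blast
  define e where "e = min t (1 - t)"
  have e: "0 < e" "e \<le> t" "e \<le> 1 - t" using t e_def by auto
  define D where "D z = T1 z - T2 z" for z
  have blD: "bounded_linear D" unfolding D_def by (rule bounded_linear_sub[OF bl1 bl2])
  interpret Dl: bounded_linear D by (rule blD)
  have P: "norm (T z + s *\<^sub>R D z) \<le> norm z" if "\<bar>s\<bar> \<le> e" for z s
  proof -
    have eq: "T z + s *\<^sub>R D z = (t + s) *\<^sub>R T1 z + (1 - t - s) *\<^sub>R T2 z"
      by (simp add: Teq D_def algebra_simps)
    have nn: "0 \<le> t + s" "0 \<le> 1 - t - s" using that e by auto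
    have n1: "norm (T1 z) \<le> norm z"
      using order_trans[OF onorm[OF bl1, of z] mult_right_mono[OF o1 norm_ge_zero[of z]]] by simp
    have n2: "norm (T2 z) \<le> norm z"
      using order_trans[OF onorm[OF bl2, of z] mult_right_mono[OF o2 norm_ge_zero[of z]]] by simp
    have "norm (T z + s *\<^sub>R D z) \<le> norm ((t + s) *\<^sub>R T1 z) + norm ((1 - t - s) *\<^sub>R T2 z)"
      unfolding eq by (rule norm_triangle_ineq)
    also have "\<dots> = (t + s) * norm (T1 z) + (1 - t - s) * norm (T2 z)" using nn by simp
    also have "\<dots> \<le> (t + s) * norm z + (1 - t - s) * norm z"
      by (intro add_mono mult_left_mono n1 n2 nn)
    also have "\<dots> = norm z" by (simp add: algebra_simps)
    finally show ?thesis .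
  qed
  have Dx: "D x = 0"
  proof -
    have a: "norm (T x + e *\<^sub>R D x) \<le> 1" using P[of e x] e nx by simp
    have b: "norm (T x + (-e) *\<^sub>R D x) \<le> 1" using P[of "-e" x] e nx by simp
    have "(T x + e *\<^sub>R D x) + (T x + (-e) *\<^sub>R D x) = 2 *\<^sub>R T x" by (simp add: scaleR_2)
    then have "(1/2) *\<^sub>R ((T x + e *\<^sub>R D x) + (T x + (-e) *\<^sub>R D x)) = T x" by simp
    then have "T x + e *\<^sub>R D x = T x + (-e) *\<^sub>R D x"
      using strict_conv_mid[OF scY a b] nTx by simp
    then have h: "e *\<^sub>R D x = - (e *\<^sub>R D x)" by simp
    have "e *\<^sub>R D x + e *\<^sub>R D x = 0" by (subst (2) h) (rule right_minus)
    then have "(2::real) *\<^sub>R (e *\<^sub>R D x) = 0" by (simp only: scaleR_2)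
    then show ?thesis using e by simp
  qed
  obtain f :: "'b \<Rightarrow> real" where blf: "bounded_linear f" and of: "onorm f = 1" and fTx: "f (T x) = 1"
    by (rule f_exists)
  interpret fl: bounded_linear f by (rule blf)
  have fb: "\<bar>f v\<bar> \<le> norm v" for v using onorm[OF blf, of v] of by simp
  have g1: "(\<lambda>z. f (T z)) = ca"
  proof (rule smooth_unique[OF smX nx _ _ _ bl_ca onorm_ca ca_x])
    show bl: "bounded_linear (\<lambda>z. f (T z))" by (rule bounded_linear_compose[OF blf blT])
    show "onorm (\<lambda>z. f (T z)) = 1"
      by (rule onorm_one[OF bl _ nx fTx]) (use fb Tbound order_trans in fastforce)
  qed (simp add: fTx)
  have fTy: "f (T y) = 0" using fun_cong[OF g1, of y] ca_y by simp
  have g2: "(\<lambda>z. f (T z + e *\<^sub>R D z)) = ca"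
  proof (rule smooth_unique[OF smX nx _ _ _ bl_ca onorm_ca ca_x])
    show bl: "bounded_linear (\<lambda>z. f (T z + e *\<^sub>R D z))"
      by (rule bounded_linear_compose[OF blf bounded_linear_add[OF blT bounded_linear_compose[OF bounded_linear_scaleR_right blD]]])
    have "\<bar>f (T z + e *\<^sub>R D z)\<bar> \<le> norm z" for z
      using fb[of "T z + e *\<^sub>R D z"] P[of e z] e by simp
    then show "onorm (\<lambda>z. f (T z + e *\<^sub>R D z)) = 1"
      by (intro onorm_one[OF bl _ nx]) (simp_all add: Dx fTx)
  qed (simp add: Dx fTx)
  have "f (T y + e *\<^sub>R D y) = 0" using fun_cong[OF g2, of y] ca_y by simp
  then have "e * f (D y) = 0" using fTy by (simp add: fl.add fl.scaleR)
  then have fDy: "f (D y) = 0" using e by simp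
  obtain z where z: "D y = T z" using rangeT by (metis UNIV_I image_iff)
  have "f (D y) = ca z" using z T_dec[of z] fTx fTy by (simp add: fl.add fl.scaleR)
  then have "ca z = 0" using fDy by simp
  define \<beta> where "\<beta> = cb z"
  have Dy: "D y = \<beta> *\<^sub>R T y" using z T_dec[of z] \<open>ca z = 0\<close> \<beta>_def by simp
  have Ddec: "D u = cb u *\<^sub>R D y" for u
    by (subst dec[of u]) (simp add: Dl.add Dl.scaleR Dx)
  have "\<beta> \<noteq> 0"
  proof
    assume "\<beta> = 0"
    then have "D u = 0" for u using Ddec[of u] Dy by simp
    then have "T1 = T2" unfolding D_def by (intro ext) simp
    with T12 show False by simp
  qed
  define s where "s = (if \<beta> > 0 then e else -e)"
  have s: "\<bar>s\<bar> \<le> e" "s * \<beta> = e * \<bar>\<beta>\<bar>" using s_def e \<open>\<beta> \<noteq> 0\<close> by auto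
  define \<mu> where "\<mu> = \<nu> * (1 + e * \<bar>\<beta>\<bar>)"
  have \<mu>gt: "\<mu> > \<nu>" unfolding \<mu>_def using \<nu>pos e \<open>\<beta> \<noteq> 0\<close> by simp
  have nw: "norm w = 1" using w_def \<nu>_def \<nu>pos by simp
  have fw: "f w = 0" using w_def fTy by (simp add: fl.scaleR)
  have ow: "bj_orth (T x) w" unfolding bj_orth_def
  proof
    fix l :: real
    have "f (T x + l *\<^sub>R w) = 1" using fTx fw by (simp add: fl.add fl.scaleR)
    then show "norm (T x + l *\<^sub>R w) \<ge> norm (T x)" using fb[of "T x + l *\<^sub>R w"] nTx by simp
  qed
  have key: "norm (a *\<^sub>R T x + (b * \<mu>) *\<^sub>R w) \<le> norm (a *\<^sub>R x + b *\<^sub>R y)" for a b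
  proof -
    have "T (a *\<^sub>R x + b *\<^sub>R y) + s *\<^sub>R D (a *\<^sub>R x + b *\<^sub>R y)
        = a *\<^sub>R T x + (b * (1 + s * \<beta>)) *\<^sub>R T y"
      by (simp add: Tl.add Tl.scaleR Dl.add Dl.scaleR Dx Dy algebra_simps)
    also have "\<dots> = a *\<^sub>R T x + (b * \<mu>) *\<^sub>R w"
      using \<nu>pos by (simp add: Tyw \<mu>_def s(2))
    finally show ?thesis using P[OF s(1)] by metis
  qed
  have "mu_CPP \<mu> x (T x) y w"
    unfolding mu_CPP_def
  proof (intro conjI)
    show "\<mu> > 0" using \<mu>gt \<nu>pos by simp
    show "\<exists>r>0. \<forall>a b. a *\<^sub>R x + b *\<^sub>R y \<in> ball x r \<and> norm (a *\<^sub>R x + b *\<^sub>R y) = 1 \<longrightarrow>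
        norm (a *\<^sub>R T x + (b * \<mu>) *\<^sub>R w) \<le> 1"
    proof (intro exI[of _ "1::real"] conjI allI impI)
      fix a b assume "a *\<^sub>R x + b *\<^sub>R y \<in> ball x 1 \<and> norm (a *\<^sub>R x + b *\<^sub>R y) = 1"
      then show "norm (a *\<^sub>R T x + (b * \<mu>) *\<^sub>R w) \<le> 1" using key[of a b] by simp
    qed simp
  qed (use nx nTx oxy ny ow nw in auto)
  then show ?thesis using \<mu>gt \<nu>_def w_def by blast
qed


lemma far_bound:
  assumes r: "r > 0"
  shows "\<exists>\<delta>>0. \<forall>u. norm u = 1 \<and> r \<le> norm (u - x) \<and> r \<le> norm (u + x) \<longrightarrow> norm (T u) \<le> 1 - \<delta>"
proof -
  define \<Phi> where "\<Phi> p = fst p *\<^sub>R x + snd p *\<^sub>R y" for p :: "real \<times> real"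
  have c\<Phi>: "continuous_on UNIV \<Phi>" unfolding \<Phi>_def by (intro continuous_intros)
  define K where "K = {p. norm (\<Phi> p) = 1 \<and> r \<le> norm (\<Phi> p - x) \<and> r \<le> norm (\<Phi> p + x)}"
  have clK: "closed K" unfolding K_def
    by (intro closed_Collect_conj closed_Collect_eq closed_Collect_le continuous_intros
        continuous_on_compose2[OF continuous_on_norm_id, of UNIV] c\<Phi>) (auto intro!: continuous_intros c\<Phi> simp: \<Phi>_def)
  have sub: "K \<subseteq> {-1..1} \<times> {-2..2}"
  proof
    fix p assume "p \<in> K"
    then have n1: "norm (\<Phi> p) = 1" unfolding K_def by simp
    have a: "\<bar>fst p\<bar> \<le> 1" using orth_coef[OF oxy nx, of "fst p" "snd p"] n1 unfolding \<Phi>_def by simp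
    have "snd p *\<^sub>R y = \<Phi> p - fst p *\<^sub>R x" unfolding \<Phi>_def by simp
    then have "\<bar>snd p\<bar> = norm (\<Phi> p - fst p *\<^sub>R x)" using ny by (metis norm_scaleR mult.right_neutral)
    also have "\<dots> \<le> norm (\<Phi> p) + \<bar>fst p\<bar>" using norm_triangle_ineq4[of "\<Phi> p" "fst p *\<^sub>R x"] nx by simp
    finally have b: "\<bar>snd p\<bar> \<le> 2" using a n1 by simp
    show "p \<in> {-1..1} \<times> {-2..2}" using a b by (cases p) auto
  qed
  have cK: "compact K"
  proof -
    have "compact ({-1..1::real} \<times> {-2..2::real})" by (intro compact_Times compact_Icc)
    then have "compact (K \<inter> ({-1..1} \<times> {-2..2}))" by (rule closed_Int_compact[OF clK])
    then show ?thesis using sub by (simp add: Int_absorb2)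
  qed
  have mem: "(ca u, cb u) \<in> K" if "norm u = 1" "r \<le> norm (u - x)" "r \<le> norm (u + x)" for u
    using that dec[of u] unfolding K_def \<Phi>_def by simp
  show ?thesis
  proof (cases "K = {}")
    case True
    then show ?thesis using mem by (intro exI[of _ "1::real"]) auto
  next
    case False
    have cont: "continuous_on K (\<lambda>p. norm (T (\<Phi> p)))"
      by (intro continuous_on_norm Tl.continuous_on continuous_on_subset[OF c\<Phi>]) simp
    obtain p0 where p0: "p0 \<in> K" and mx: "\<And>p. p \<in> K \<Longrightarrow> norm (T (\<Phi> p)) \<le> norm (T (\<Phi> p0))"
      using continuous_attains_sup[OF cK False cont] by blast
    have n0: "norm (\<Phi> p0) = 1" and d0: "r \<le> norm (\<Phi> p0 - x)" "r \<le> norm (\<Phi> p0 + x)"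
      using p0 unfolding K_def by auto
    have le1: "norm (T (\<Phi> p0)) \<le> 1" using Tbound[of "\<Phi> p0"] n0 by simp
    have ne1: "norm (T (\<Phi> p0)) \<noteq> 1"
    proof
      assume "norm (T (\<Phi> p0)) = 1"
      then have "\<Phi> p0 \<in> norm_attain T" using n0 oT unfolding norm_attain_def by simp
      then have "\<Phi> p0 = x \<or> \<Phi> p0 = -x" using MT by simp
      then show False using d0 r by auto
    qed
    show ?thesis
    proof (intro exI[of _ "1 - norm (T (\<Phi> p0))"] conjI allI impI)
      show "0 < 1 - norm (T (\<Phi> p0))" using le1 ne1 by simp
      fix u assume u: "norm u = 1 \<and> r \<le> norm (u - x) \<and> r \<le> norm (u + x)"
      have e: "u = \<Phi> (ca u, cb u)" unfolding \<Phi>_def using dec[of u] by simp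
      have "(ca u, cb u) \<in> K" using mem u by blast
      then have "norm (T (\<Phi> (ca u, cb u))) \<le> norm (T (\<Phi> p0))" by (rule mx)
      then show "norm (T u) \<le> 1 - (1 - norm (T (\<Phi> p0)))" using e by simp
    qed
  qed
qed

lemma interval_bound:
  fixes w :: 'b
  assumes n1: "norm (a *\<^sub>R x + b *\<^sub>R y) = 1" and hm: "norm (a *\<^sub>R T x + (b * \<mu>) *\<^sub>R w) \<le> 1"
    and l: "0 \<le> lam" "lam \<le> \<mu>" and \<mu>: "\<mu> > 0"
  shows "norm (a *\<^sub>R T x + (b * lam) *\<^sub>R w) \<le> 1"
proof -
  have a: "\<bar>a\<bar> \<le> 1" using orth_coef[OF oxy nx, of a b] n1 by simp
  define \<theta> where "\<theta> = lam / \<mu>"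
  have th: "0 \<le> \<theta>" "\<theta> \<le> 1" using l \<mu> \<theta>_def by auto
  have "a *\<^sub>R T x + (b * lam) *\<^sub>R w = (1 - \<theta>) *\<^sub>R (a *\<^sub>R T x) + \<theta> *\<^sub>R (a *\<^sub>R T x + (b * \<mu>) *\<^sub>R w)"
    using \<mu> by (simp add: \<theta>_def algebra_simps)
  then have "norm (a *\<^sub>R T x + (b * lam) *\<^sub>R w) \<le> (1 - \<theta>) * norm (a *\<^sub>R T x) + \<theta> * norm (a *\<^sub>R T x + (b * \<mu>) *\<^sub>R w)"
    using th by (metis (no_types, lifting) abs_of_nonneg diff_ge_0_iff_ge norm_scaleR norm_triangle_ineq)
  also have "\<dots> \<le> (1 - \<theta>) * 1 + \<theta> * 1"
    using a nTx th hm by (intro add_mono mult_left_mono) auto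
  finally show ?thesis by simp
qed


lemma dir2:
  assumes \<mu>gt: "\<mu> > norm (T y)" and cpp: "mu_CPP \<mu> x (T x) y ((1 / norm (T y)) *\<^sub>R T y)"
  shows "\<not> extreme_contraction T"
proof -
  define \<nu> where "\<nu> = norm (T y)"
  define w where "w = (1 / \<nu>) *\<^sub>R T y"
  have \<nu>pos: "\<nu> > 0" using nTy_pos \<nu>_def by simp
  have Tyw: "T y = \<nu> *\<^sub>R w" using \<nu>pos w_def by simp
  have \<mu>pos: "\<mu> > 0" using \<mu>gt norm_ge_zero[of "T y"] by linarith
  obtain r where r: "r > 0" and H: "\<And>a b. a *\<^sub>R x + b *\<^sub>R y \<in> ball x r \<Longrightarrow> norm (a *\<^sub>R x + b *\<^sub>R y) = 1
        \<Longrightarrow> norm (a *\<^sub>R T x + (b * \<mu>) *\<^sub>R w) \<le> 1"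
    using cpp unfolding mu_CPP_def w_def \<nu>_def by blast
  obtain \<delta> where \<delta>: "\<delta> > 0" and F: "\<And>u. norm u = 1 \<Longrightarrow> r \<le> norm (u - x) \<Longrightarrow> r \<le> norm (u + x) \<Longrightarrow> norm (T u) \<le> 1 - \<delta>"
    using far_bound[OF r] by blast
  define \<epsilon> where "\<epsilon> = min (min 1 (\<mu> / \<nu> - 1)) (\<delta> / 2)"
  have \<epsilon>: "0 < \<epsilon>" "\<epsilon> \<le> 1" "\<epsilon> \<le> \<mu> / \<nu> - 1" "\<epsilon> \<le> \<delta> / 2"
  proof -
    have "\<mu> / \<nu> > 1" using \<mu>gt \<nu>pos \<nu>_def by simp
    then show "0 < \<epsilon>" using \<delta> unfolding \<epsilon>_def by simp
    show "\<epsilon> \<le> 1" unfolding \<epsilon>_def by linarith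
    show "\<epsilon> \<le> \<mu> / \<nu> - 1" unfolding \<epsilon>_def by linarith
    show "\<epsilon> \<le> \<delta> / 2" unfolding \<epsilon>_def by linarith
  qed
  have unit: "norm (T u + (s * cb u) *\<^sub>R T y) \<le> 1" if u: "norm u = 1" and s: "\<bar>s\<bar> \<le> \<epsilon>" for u s
  proof -
    define a where "a = ca u"
    define b where "b = cb u"
    have ud: "u = a *\<^sub>R x + b *\<^sub>R y" using dec[of u] a_def b_def by simp
    have eq: "T u + (s * cb u) *\<^sub>R T y = a *\<^sub>R T x + (b * ((1 + s) * \<nu>)) *\<^sub>R w"
      using T_dec[of u] Tyw by (simp add: a_def b_def algebra_simps)
    have l: "0 \<le> (1 + s) * \<nu>" "(1 + s) * \<nu> \<le> \<mu>"
    proof -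
      show "0 \<le> (1 + s) * \<nu>" using s \<epsilon> \<nu>pos by simp
      have "1 + s \<le> \<mu> / \<nu>" using s \<epsilon> by simp
      then show "(1 + s) * \<nu> \<le> \<mu>" using \<nu>pos by (simp add: field_simps)
    qed
    have n1: "norm (a *\<^sub>R x + b *\<^sub>R y) = 1" using ud u by simp
    show ?thesis
    proof (cases "u \<in> ball x r")
      case True
      then have "norm (a *\<^sub>R T x + (b * \<mu>) *\<^sub>R w) \<le> 1" using H ud u by simp
      then show ?thesis unfolding eq using interval_bound[OF n1 _ l \<mu>pos] by blast
    next
      case nb: False
      show ?thesis
      proof (cases "-u \<in> ball x r")
        case True
        have mu: "-u = (-a) *\<^sub>R x + (-b) *\<^sub>R y" using ud by simp
        have inb: "(-a) *\<^sub>R x + (-b) *\<^sub>R y \<in> ball x r" unfolding mu[symmetric] by (rule True)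
        have nm: "norm ((-a) *\<^sub>R x + (-b) *\<^sub>R y) = 1" unfolding mu[symmetric] using u by simp
        have "norm ((-a) *\<^sub>R T x + ((-b) * \<mu>) *\<^sub>R w) \<le> 1" by (rule H[OF inb nm])
        moreover have "(-a) *\<^sub>R T x + ((-b) * \<mu>) *\<^sub>R w = - (a *\<^sub>R T x + (b * \<mu>) *\<^sub>R w)" by simp
        ultimately have "norm (a *\<^sub>R T x + (b * \<mu>) *\<^sub>R w) \<le> 1" by (metis norm_minus_cancel)
        then show ?thesis unfolding eq using interval_bound[OF n1 _ l \<mu>pos] by blast
      next
        case False
        have d1: "r \<le> norm (u - x)" using nb by (simp add: dist_norm norm_minus_commute)
        have d2: "r \<le> norm (u + x)" using False by (simp add: dist_norm add.commute)
        have Tu: "norm (T u) \<le> 1 - \<delta>" using F[OF u d1 d2] .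
        have "norm ((s * cb u) *\<^sub>R T y) = \<bar>s\<bar> * \<bar>cb u\<bar> * \<nu>" by (simp add: \<nu>_def abs_mult)
        also have "\<dots> \<le> \<epsilon> * 2 * 1"
          using s cb_bound[of u] u nTy_lt \<nu>pos \<nu>_def
          by (intro mult_mono) auto
        finally have "norm ((s * cb u) *\<^sub>R T y) \<le> \<delta>" using \<epsilon> by simp
        then show ?thesis using Tu norm_triangle_ineq[of "T u" "(s * cb u) *\<^sub>R T y"] by simp
      qed
    qed
  qed
  have gen: "norm (T z + (s * cb z) *\<^sub>R T y) \<le> norm z" if s: "\<bar>s\<bar> \<le> \<epsilon>" for z s
  proof (cases "z = 0")
    case True
    then show ?thesis using Tl.zero cb_scale[of 0 0] by simp
  next
    case False
    define u where "u = (1 / norm z) *\<^sub>R z"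
    have nu: "norm u = 1" using False u_def by simp
    have zu: "z = norm z *\<^sub>R u" using False u_def by simp
    have "T z + (s * cb z) *\<^sub>R T y = norm z *\<^sub>R (T u + (s * cb u) *\<^sub>R T y)"
      by (subst (1 2) zu) (simp add: Tl.scaleR cb_scale algebra_simps)
    then show ?thesis using mult_left_mono[OF unit[OF nu s] norm_ge_zero[of z]] by simp
  qed
  define T1 where "T1 z = T z + (\<epsilon> * cb z) *\<^sub>R T y" for z
  define T2 where "T2 z = T z + ((-\<epsilon>) * cb z) *\<^sub>R T y" for z
  have blm: "bounded_linear (\<lambda>z. (c * cb z) *\<^sub>R T y)" for c
    by (rule bounded_linear_compose[OF bounded_linear_scaleR_left bounded_linear_compose[OF bounded_linear_mult_right bl_cb]])
  have bl1: "bounded_linear T1" unfolding T1_def by (rule bounded_linear_add[OF blT blm])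
  have bl2: "bounded_linear T2" unfolding T2_def by (rule bounded_linear_add[OF blT blm])
  have o1: "onorm T1 \<le> 1" by (rule onorm_bound) (use gen \<epsilon> in \<open>auto simp: T1_def\<close>)
  have o2: "onorm T2 \<le> 1"
  proof (rule onorm_bound)
    fix z show "norm (T2 z) \<le> 1 * norm z" using gen[of "-\<epsilon>" z] \<epsilon> unfolding T2_def by simp
  qed simp
  have ne: "T1 \<noteq> T2"
  proof
    assume "T1 = T2"
    then have "T1 y = T2 y" by simp
    then have h: "\<epsilon> *\<^sub>R T y = (-\<epsilon>) *\<^sub>R T y" unfolding T1_def T2_def using cb_y by simp
    have "(\<epsilon> - (-\<epsilon>)) *\<^sub>R T y = 0" unfolding scaleR_left_diff_distrib h by simp
    then show False using \<epsilon> Ty_ne by simp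
  qed
  have Teq: "T = (\<lambda>z. (1/2) *\<^sub>R T1 z + (1 - 1/2) *\<^sub>R T2 z)"
    unfolding T1_def T2_def by (rule ext) (simp add: algebra_simps, simp flip: scaleR_left_distrib)
  show ?thesis unfolding extreme_contraction_def
    using bl1 bl2 o1 o2 ne Teq by (metis (no_types, lifting) half_gt_zero less_numeral_extra(1) zero_less_one
        field_sum_of_halves less_add_same_cancel1)
qed

end

theorem mainTheorem15:
  fixes T :: "'a::banach \<Rightarrow> 'b::banach" and x y :: 'a
  assumes "dim (UNIV :: 'a set) = 2" and "dim (UNIV :: 'b set) = 2"
    and "smooth_space TYPE('a)" and "smooth_space TYPE('b)"
    and "strictly_convex_space TYPE('b)"
    and "bounded_linear T" and "dim (range T) = 2" and "onorm T = 1"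
    and "norm_attain T = {x, -x}"
    and "bj_orth x y" and "norm y = 1"
  shows "0 < norm (T y) \<and> norm (T y) < 1 \<and>
    (\<not> extreme_contraction T \<longleftrightarrow>
      (\<exists>\<mu>. \<mu> > norm (T y) \<and> mu_CPP \<mu> x (T x) y ((1 / norm (T y)) *\<^sub>R T y)))"
  proof -
  interpret thmctx T x y by (rule thmctx.intro[OF assms])
  show ?thesis using nTy_pos nTy_lt dir1 dir2 by blast
qed

end
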